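(* Let $\mathcal{M}=\langle M,\circ,e\rangle$ be an mge monoid and let $\langle m_1,\dots,m_l\rangle,\langle n_1,\dots,n_l\rangle\in M^l$ have a joint equalizer. Then every mge for $\langle m_1,\dots,m_l\rangle$ is an mge for $\langle n_1,\dots,n_l\rangle$ and vice versa. Furthermore $Eq^{(l)}(m_1,\dots,m_l)=Eq^{(l)}(n_1,\dots,n_l)$.
   Context: In a monoid $\langle M,\circ,e\rangle$, a tuple $\langle m_1,\dots,m_n\rangle\in M^n$ is equalizable if there is $\langle x_1,\dots,x_n\rangle\in M^n$ (an equalizer) with $m_1x_1=\dots=m_nx_n$; $Eq^{(n)}(m_1,\dots,m_n)\subseteq M^n$ denotes the set of all equalizers of $\langle m_1,\dots,m_n\rangle$. An equalizer is a most general equalizer (mge) if every equalizer has the form $\langle x_1x,\dots,x_nx\rangle$ for some $x\in M$. An mge monoid is a monoid with right cancellation ($ac=bc\Rightarrow a=b$) in which every equalizable pair has an mge. A tuple $\langle x_1,\dots,x_n\rangle$ is a joint equalizer for $\langle m_1,\dots,m_n\rangle$ and $\langle m'_1,\dots,m'_n\rangle$ if it is an equalizer for both (it is not required that $m_ix_i=m'_ix_i$). *)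

theory Defs
  imports Main
begin

text \<open>A monoid is modelled by the type class monoid_mult (operation *, unit 1).
  Tuples in M^l are lists of length l.\<close>

definition is_equalizer :: "'a::monoid_mult list \<Rightarrow> 'a list \<Rightarrow> bool" where
  "is_equalizer ms xs \<longleftrightarrow> length xs = length ms \<and>
     (\<forall>i < length ms. \<forall>j < length ms. ms ! i * xs ! i = ms ! j * xs ! j)"

definition Eq :: "'a::monoid_mult list \<Rightarrow> 'a list set" where
  "Eq ms = {xs. is_equalizer ms xs}"

definition equalizable :: "'a::monoid_mult list \<Rightarrow> bool" where
  "equalizable ms \<longleftrightarrow> (\<exists>xs. is_equalizer ms xs)"

definition is_mge :: "'a::monoid_mult list \<Rightarrow> 'a list \<Rightarrow> bool" where
  "is_mge ms xs \<longleftrightarrow> is_equalizer ms xs \<and>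
     (\<forall>ys. is_equalizer ms ys \<longrightarrow> (\<exists>z. ys = map (\<lambda>x. x * z) xs))"

definition is_joint_equalizer :: "'a::monoid_mult list \<Rightarrow> 'a list \<Rightarrow> 'a list \<Rightarrow> bool" where
  "is_joint_equalizer ms ns xs \<longleftrightarrow> is_equalizer ms xs \<and> is_equalizer ns xs"

definition mge_monoid :: "'a::monoid_mult itself \<Rightarrow> bool" where
  "mge_monoid _ \<longleftrightarrow>
     (\<forall>a b c :: 'a. a * c = b * c \<longrightarrow> a = b) \<and>
     (\<forall>m1 m2 :: 'a. equalizable [m1, m2] \<longrightarrow> (\<exists>xs. is_mge [m1, m2] xs))"

end

theory Submission
  imports Defs
begin

lemma eq2: "is_equalizer [a, b] [x, y] \<longleftrightarrow> (a::'a::monoid_mult) * x = b * y"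
proof -
  have "(\<forall>i<2. \<forall>j<2. [a, b] ! i * [x, y] ! i = [a, b] ! j * [x, y] ! j) \<longleftrightarrow> a * x = b * y"
  proof
    assume h: "\<forall>i<2. \<forall>j<2. [a, b] ! i * [x, y] ! i = [a, b] ! j * [x, y] ! j"
    show "a * x = b * y" using h[rule_format, of 0 1] by simp
  next
    assume "a * x = b * y"
    then show "\<forall>i<2. \<forall>j<2. [a, b] ! i * [x, y] ! i = [a, b] ! j * [x, y] ! j"
      by (auto simp: numeral_2_eq_2 less_Suc_eq)
  qed
  then show ?thesis unfolding is_equalizer_def by (simp add: numeral_2_eq_2)
qed

lemma pair_step:
  fixes mi mj ni nj yi yj wi wj :: "'a::monoid_mult"
  assumes M: "mge_monoid TYPE('a)"
    and y1: "mi * yi = mj * yj" and y2: "ni * yi = nj * yj"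
    and w: "mi * wi = mj * wj"
  shows "ni * wi = nj * wj"
proof -
  have canc: "\<And>a b c :: 'a. a * c = b * c \<Longrightarrow> a = b" using M unfolding mge_monoid_def by blast
  have eqz: "equalizable [mi, mj]" unfolding equalizable_def
    using y1 eq2 by blast
  then obtain xs where xs: "is_mge [mi, mj] xs" using M unfolding mge_monoid_def by blast
  have ey: "is_equalizer [mi, mj] [yi, yj]" using y1 eq2 by blast
  have ew: "is_equalizer [mi, mj] [wi, wj]" using w eq2 by blast
  have lx: "length xs = 2" using xs unfolding is_mge_def is_equalizer_def by simp
  have "\<exists>a b. xs = [a, b]" using lx by (simp add: length_Suc_conv numeral_2_eq_2) blast
  then obtain a b where ab: "xs = [a, b]" by blast
  have gen: "\<And>ys. is_equalizer [mi, mj] ys \<Longrightarrow> \<exists>z. ys = map (\<lambda>x. x * z) xs"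
    using xs unfolding is_mge_def by simp
  obtain z where z: "[yi, yj] = map (\<lambda>x. x * z) xs" using gen[OF ey] by (rule exE)
  obtain z' where z': "[wi, wj] = map (\<lambda>x. x * z') xs" using gen[OF ew] by (rule exE)
  have zz: "yi = a * z" "yj = b * z" using z unfolding ab by simp_all
  have zz': "wi = a * z'" "wj = b * z'" using z' unfolding ab by simp_all
  have "ni * a * z = nj * b * z" using y2 unfolding zz by (simp only: mult.assoc)
  then have nab: "ni * a = nj * b" by (rule canc)
  have "ni * wi = ni * a * z'" unfolding zz' by (simp only: mult.assoc)
  also have "\<dots> = nj * b * z'" using nab by (rule arg_cong)
  also have "\<dots> = nj * wj" unfolding zz' by (simp only: mult.assoc)
  finally show ?thesis .
qed

lemma Eq_sub:
  fixes ms ns :: "'a::monoid_mult list"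
  assumes M: "mge_monoid TYPE('a)" and l: "length ms = length ns"
    and y: "is_joint_equalizer ms ns ys"
  shows "Eq ms \<subseteq> Eq ns"
proof
  fix ws assume "ws \<in> Eq ms"
  then have w: "is_equalizer ms ws" by (simp add: Eq_def)
  have y1: "is_equalizer ms ys" and y2: "is_equalizer ns ys"
    using y unfolding is_joint_equalizer_def by auto
  have "is_equalizer ns ws" unfolding is_equalizer_def
  proof (intro conjI allI impI)
    show "length ws = length ns" using w l by (simp add: is_equalizer_def)
    fix i j assume i: "i < length ns" and j: "j < length ns"
    have i': "i < length ms" and j': "j < length ms" using i j l by simp_all
    have a1: "ms ! i * ys ! i = ms ! j * ys ! j"
      using y1 i' j' unfolding is_equalizer_def by blast
    have a2: "ns ! i * ys ! i = ns ! j * ys ! j"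
      using y2 i j unfolding is_equalizer_def by blast
    have a3: "ms ! i * ws ! i = ms ! j * ws ! j"
      using w i' j' unfolding is_equalizer_def by blast
    show "ns ! i * ws ! i = ns ! j * ws ! j"
      by (rule pair_step[OF M a1 a2 a3])
  qed
  then show "ws \<in> Eq ns" by (simp add: Eq_def)
qed

theorem lemma3:
  fixes ms ns :: "'a::monoid_mult list"
  assumes "mge_monoid TYPE('a)"
    and "length ms = l" and "length ns = l"
    and "\<exists>xs. is_joint_equalizer ms ns xs"
  shows "(\<forall>xs. is_mge ms xs \<longrightarrow> is_mge ns xs) \<and> (\<forall>xs. is_mge ns xs \<longrightarrow> is_mge ms xs)
         \<and> Eq ms = Eq ns"
proof -
  obtain ys where y: "is_joint_equalizer ms ns ys" using assms(4) by blast
  have y': "is_joint_equalizer ns ms ys" using y by (simp add: is_joint_equalizer_def)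
  have l: "length ms = length ns" using assms(2,3) by simp
  have E: "Eq ms = Eq ns"
    using Eq_sub[OF assms(1) l y] Eq_sub[OF assms(1) l[symmetric] y'] by (rule subset_antisym)
  have EE: "\<And>xs. is_equalizer ms xs = is_equalizer ns xs"
  proof -
    fix xs
    have "(xs \<in> Eq ms) = (xs \<in> Eq ns)" using E by simp
    then show "is_equalizer ms xs = is_equalizer ns xs" by (simp add: Eq_def)
  qed
  have M: "\<And>xs. is_mge ms xs = is_mge ns xs" unfolding is_mge_def EE ..
  show ?thesis using E M by blast
qed

end
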